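(* Let $(X,\sigma)$ be a Toeplitz subshift with period structure $(p_n)$. Then $\operatorname{Aut}^{(\infty)}(X,\sigma)$ is the direct limit of the sequence $$\operatorname{Aut}(X,\sigma)\hookrightarrow\operatorname{Aut}(X,\sigma^{p_1})\hookrightarrow\operatorname{Aut}(X,\sigma^{p_2})\hookrightarrow\operatorname{Aut}(X,\sigma^{p_3})\hookrightarrow\cdots$$ where the maps are the natural inclusions; equivalently $\operatorname{Aut}^{(\infty)}(X,\sigma)=\operatorname{Aut}(X,\sigma)\cup\bigcup_{n\ge1}\operatorname{Aut}(X,\sigma^{p_n})$ inside $\operatorname{Homeo}(X)$.
   Context: Let $\mathcal{A}$ be a finite alphabet and $\sigma$ the left shift on $\mathcal{A}^{\mathbb{Z}}$. A Toeplitz sequence $u$ is one such that for every $n\in\mathbb{Z}$ there is $m\ge1$ with $u_n=u_{n+km}$ for all $k$; it is assumed non-periodic. With $\operatorname{per}_p(u)=\{k: u_k=u_{k+pm}\ \forall m\}$, a period structure is a sequence $(p_n)$ with $p_n\mid p_{n+1}$, $\bigcup_n\operatorname{per}_{p_n}(u)=\mathbb{Z}$, each $p_n$ essential. The Toeplitz subshift $(X,\sigma)$ is the orbit closure of $u$ with the shift. $\operatorname{Aut}(X,T)$ is the group of homeomorphisms commuting with $T$ and $\operatorname{Aut}^{(\infty)}(X,T)=\bigcup_{n\ge1}\operatorname{Aut}(X,T^n)\subseteq\operatorname{Homeo}(X)$. *)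

theory Defs
  imports "HOL-Analysis.Analysis"
begin

definition fullshift_top :: "(int \<Rightarrow> 'a) topology" where
  "fullshift_top = product_topology (\<lambda>_. discrete_topology UNIV) UNIV"

definition shift :: "(int \<Rightarrow> 'a) \<Rightarrow> (int \<Rightarrow> 'a)" where
  "shift x = (\<lambda>k. x (k + 1))"

definition toeplitz :: "(int \<Rightarrow> 'a) \<Rightarrow> bool" where
  "toeplitz u \<longleftrightarrow> (\<forall>n. \<exists>m::int. m \<ge> 1 \<and> (\<forall>k::int. u n = u (n + k * m)))"

definition periodic_seq :: "(int \<Rightarrow> 'a) \<Rightarrow> bool" where
  "periodic_seq u \<longleftrightarrow> (\<exists>q::int. q \<ge> 1 \<and> (\<forall>n. u (n + q) = u n))"

definition per :: "nat \<Rightarrow> (int \<Rightarrow> 'a) \<Rightarrow> int set" where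
  "per p u = {k. \<forall>m::int. u k = u (k + int p * m)}"

definition skeleton :: "nat \<Rightarrow> (int \<Rightarrow> 'a) \<Rightarrow> int \<Rightarrow> 'a option" where
  "skeleton p u k = (if k \<in> per p u then Some (u k) else None)"

definition essential_period :: "nat \<Rightarrow> (int \<Rightarrow> 'a) \<Rightarrow> bool" where
  "essential_period p u \<longleftrightarrow> p \<ge> 1 \<and> per p u \<noteq> {} \<and>
     (\<forall>q. 1 \<le> q \<and> q < p \<longrightarrow> (\<exists>k. skeleton p u (k + int q) \<noteq> skeleton p u k))"

definition period_structure :: "(nat \<Rightarrow> nat) \<Rightarrow> (int \<Rightarrow> 'a) \<Rightarrow> bool" where
  "period_structure p u \<longleftrightarrow>
     (\<forall>n. p n dvd p (Suc n)) \<and> (\<Union>n. per (p n) u) = UNIV \<and>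
     (\<forall>n. essential_period (p n) u)"

definition orbit_closure :: "(int \<Rightarrow> 'a) \<Rightarrow> (int \<Rightarrow> 'a) set" where
  "orbit_closure u = fullshift_top closure_of {(\<lambda>j. u (j + k)) | k::int. True}"

definition Aut :: "(int \<Rightarrow> 'a) set \<Rightarrow> ((int \<Rightarrow> 'a) \<Rightarrow> (int \<Rightarrow> 'a))
                  \<Rightarrow> ((int \<Rightarrow> 'a) \<Rightarrow> (int \<Rightarrow> 'a)) set" where
  "Aut X T = {f. homeomorphic_map (subtopology fullshift_top X) (subtopology fullshift_top X) f
                 \<and> (\<forall>x\<in>X. f (T x) = T (f x))}"

definition Aut_infty :: "(int \<Rightarrow> 'a) set \<Rightarrow> ((int \<Rightarrow> 'a) \<Rightarrow> (int \<Rightarrow> 'a))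
                  \<Rightarrow> ((int \<Rightarrow> 'a) \<Rightarrow> (int \<Rightarrow> 'a)) set" where
  "Aut_infty X T = (\<Union>n\<in>{1..}. Aut X (T ^^ n))"

end

theory Submission
  imports Defs
begin

lemma fullshift_top_topspace[simp]: "topspace fullshift_top = UNIV"
  by (simp add: fullshift_top_def)

lemma cyl_open:
  assumes "finite J"
  shows "openin fullshift_top {y. \<forall>i\<in>J. y i = x i}"
  unfolding fullshift_top_def openin_product_topology_alt
proof (intro ballI)
  fix z assume z: "z \<in> {y. \<forall>i\<in>J. y i = x i}"
  define U where "U = (\<lambda>i. if i \<in> J then {z i} else (UNIV::'a set))"
  have "finite {i \<in> UNIV. U i \<noteq> topspace (discrete_topology UNIV)}"
    by (rule finite_subset[OF _ assms]) (auto simp: U_def)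
  moreover have "z \<in> Pi\<^sub>E UNIV U" by (auto simp: U_def)
  moreover have "Pi\<^sub>E UNIV U \<subseteq> {y. \<forall>i\<in>J. y i = x i}"
    using z by (auto simp: U_def PiE_iff) (metis empty_iff insert_iff)
  ultimately show "\<exists>U. finite {i \<in> UNIV. U i \<noteq> topspace (discrete_topology UNIV)} \<and>
             (\<forall>i\<in>UNIV. openin (discrete_topology UNIV) (U i)) \<and> z \<in> Pi\<^sub>E UNIV U \<and> Pi\<^sub>E UNIV U \<subseteq> {y. \<forall>i\<in>J. y i = x i}"
    by auto
qed

lemma open_cyl:
  assumes "openin fullshift_top T" "x \<in> T"
  shows "\<exists>R::int. \<forall>y. (\<forall>i. \<bar>i\<bar> \<le> R \<longrightarrow> y i = x i) \<longrightarrow> y \<in> T"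
proof -
  obtain U where U: "finite {i \<in> UNIV. U i \<noteq> topspace (discrete_topology (UNIV::'a set))}"
    "x \<in> Pi\<^sub>E UNIV U" "Pi\<^sub>E UNIV U \<subseteq> T"
    using assms unfolding fullshift_top_def openin_product_topology_alt by blast
  define J where "J = {i \<in> UNIV. U i \<noteq> topspace (discrete_topology (UNIV::'a set))}"
  have fJ: "finite J" using U(1) J_def by simp
  define R where "R = (\<Sum>i\<in>J. \<bar>i\<bar>)"
  have "y \<in> T" if "\<forall>i. \<bar>i\<bar> \<le> R \<longrightarrow> y i = x i" for y
  proof -
    have "y \<in> Pi\<^sub>E UNIV U"
    proof (unfold PiE_iff, intro conjI ballI)
      fix i :: int
      show "y i \<in> U i"
      proof (cases "i \<in> J")
        case True
        then have "\<bar>i\<bar> \<le> R" unfolding R_def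
          using fJ by (metis abs_ge_zero member_le_sum)
        then show ?thesis using that U(2) by (auto simp: PiE_iff)
      next
        case False then show ?thesis by (auto simp: J_def)
      qed
    qed simp
    then show ?thesis using U(3) by blast
  qed
  then show ?thesis by blast
qed

definition sh :: "int \<Rightarrow> (int \<Rightarrow> 'a) \<Rightarrow> (int \<Rightarrow> 'a)" where
  "sh t x = (\<lambda>j. x (j + t))"

lemma sh_apply[simp]: "sh t x j = x (j + t)" by (simp add: sh_def)
lemma sh_sh[simp]: "sh s (sh t x) = sh (s + t) x" unfolding sh_def by (rule ext) (simp add: ac_simps)
lemma sh_0[simp]: "sh 0 x = x" by (simp add: sh_def)

lemma shift_pow: "(shift ^^ k) x = sh (int k) x"
proof (induction k arbitrary: x)
  case (Suc k)
  have "(shift ^^ Suc k) x = shift (sh (int k) x)" using Suc by (simp add: sh_def)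
  also have "\<dots> = sh (int (Suc k)) x" by (rule ext) (simp add: shift_def ac_simps)
  finally show ?case .
qed (simp add: sh_def)

lemma mem_X_iff: "x \<in> orbit_closure u \<longleftrightarrow> (\<forall>L. \<exists>t. \<forall>i. \<bar>i\<bar> \<le> L \<longrightarrow> u (t+i) = x i)"
proof
  assume x: "x \<in> orbit_closure u"
  show "\<forall>L. \<exists>t. \<forall>i. \<bar>i\<bar> \<le> L \<longrightarrow> u (t+i) = x i"
  proof
    fix L :: int
    define C where "C = {y. \<forall>i\<in>{-L..L}. y i = x i}"
    have Co: "openin fullshift_top C" unfolding C_def by (rule cyl_open) simp
    have xC: "x \<in> C" unfolding C_def by simp
    have cl: "\<forall>T. x \<in> T \<and> openin fullshift_top T \<longrightarrow> (\<exists>y. y \<in> {(\<lambda>j. u (j + k)) | k::int. True} \<and> y \<in> T)"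
      using x unfolding orbit_closure_def in_closure_of by (rule conjunct2)
    obtain y where "y \<in> {(\<lambda>j. u (j + k)) | k::int. True}" "y \<in> C"
      using cl[rule_format, OF conjI[OF xC Co]] by blast
    then obtain k where k: "\<forall>i\<in>{-L..L}. u (i + k) = x i" unfolding C_def by auto
    have "\<forall>i. \<bar>i\<bar> \<le> L \<longrightarrow> u (k+i) = x i"
    proof (intro allI impI)
      fix i :: int assume "\<bar>i\<bar> \<le> L"
      then have "i \<in> {-L..L}" by (simp add: abs_le_iff)
      then have "u (i + k) = x i" using k by blast
      then show "u (k+i) = x i" by (simp add: add.commute)
    qed
    then show "\<exists>t. \<forall>i. \<bar>i\<bar> \<le> L \<longrightarrow> u (t+i) = x i" by blast
  qed
next
  assume W: "\<forall>L. \<exists>t. \<forall>i. \<bar>i\<bar> \<le> L \<longrightarrow> u (t+i) = x i"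
  show "x \<in> orbit_closure u"
    unfolding orbit_closure_def in_closure_of
  proof (intro conjI allI impI)
    fix T assume T: "x \<in> T \<and> openin fullshift_top T"
    then obtain R where R: "\<forall>y. (\<forall>i. \<bar>i\<bar> \<le> R \<longrightarrow> y i = x i) \<longrightarrow> y \<in> T"
      using open_cyl[OF conjunct2[OF T] conjunct1[OF T]] by (elim exE)
    obtain t where t: "\<forall>i. \<bar>i\<bar> \<le> R \<longrightarrow> u (t+i) = x i" using spec[OF W, of R] by blast
    have "\<forall>i. \<bar>i\<bar> \<le> R \<longrightarrow> (\<lambda>j. u (j + t)) i = x i" using t by (simp add: add.commute)
    then have "(\<lambda>j. u (j + t)) \<in> T" by (rule mp[OF spec[OF R]])
    then show "\<exists>y. y \<in> {(\<lambda>j. u (j + k)) | k::int. True} \<and> y \<in> T" by blast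
  qed simp
qed

lemma orbit_in_X: "sh t u \<in> orbit_closure u"
  unfolding mem_X_iff sh_apply by (metis add.commute)

lemma sh_in_X: "x \<in> orbit_closure u \<Longrightarrow> sh s x \<in> orbit_closure u"
  unfolding mem_X_iff
proof (intro allI)
  fix L :: int
  assume W: "\<forall>L. \<exists>t. \<forall>i. \<bar>i\<bar> \<le> L \<longrightarrow> u (t+i) = x i"
  obtain t where t: "\<forall>i. \<bar>i\<bar> \<le> L + \<bar>s\<bar> \<longrightarrow> u (t+i) = x i" using W by blast
  have "\<forall>i. \<bar>i\<bar> \<le> L \<longrightarrow> u (t + s + i) = sh s x i"
  proof (intro allI impI)
    fix i :: int assume "\<bar>i\<bar> \<le> L"
    then have "\<bar>i + s\<bar> \<le> L + \<bar>s\<bar>" by arith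
    then have "u (t + (i + s)) = x (i + s)" using t by blast
    then show "u (t + s + i) = sh s x i" by (simp add: algebra_simps)
  qed
  then show "\<exists>t. \<forall>i. \<bar>i\<bar> \<le> L \<longrightarrow> u (t + i) = sh s x i" by blast
qed

lemma cont_window:
  assumes F: "continuous_map (subtopology fullshift_top X) (subtopology fullshift_top X) F"
    and x: "x \<in> X"
  shows "\<exists>R. \<forall>y\<in>X. (\<forall>i. \<bar>i\<bar> \<le> R \<longrightarrow> y i = x i) \<longrightarrow> (\<forall>i. \<bar>i\<bar> \<le> L \<longrightarrow> F y i = F x i)"
proof -
  define C where "C = {z. \<forall>i\<in>{-L..L}. z i = F x i}"
  have "openin fullshift_top C" unfolding C_def by (rule cyl_open) simp
  then have "openin (subtopology fullshift_top X) (C \<inter> X)"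
    by (auto simp: openin_subtopology)
  then have "openin (subtopology fullshift_top X) {y \<in> topspace (subtopology fullshift_top X). F y \<in> C \<inter> X}"
    by (rule openin_continuous_map_preimage[OF F])
  then obtain T where T: "openin fullshift_top T" "{y \<in> X. F y \<in> C \<inter> X} = T \<inter> X"
    by (auto simp: openin_subtopology)
  have Fx: "F x \<in> X" using continuous_map_image_subset_topspace[OF F] x by auto
  have "x \<in> T" using T(2) x Fx by (auto simp: C_def)
  then obtain R where R: "\<forall>y. (\<forall>i. \<bar>i\<bar> \<le> R \<longrightarrow> y i = x i) \<longrightarrow> y \<in> T"
    using open_cyl[OF T(1)] by blast
  have "\<forall>y\<in>X. (\<forall>i. \<bar>i\<bar> \<le> R \<longrightarrow> y i = x i) \<longrightarrow> (\<forall>i. \<bar>i\<bar> \<le> L \<longrightarrow> F y i = F x i)"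
  proof (intro ballI impI allI)
    fix y i assume "y \<in> X" "\<forall>i. \<bar>i\<bar> \<le> R \<longrightarrow> y i = x i" "\<bar>i\<bar> \<le> L"
    then have "y \<in> T \<inter> X" using R by blast
    then have "F y \<in> C" using T(2) by blast
    moreover have "i \<in> {-L..L}" using \<open>\<bar>i\<bar> \<le> L\<close> by (simp add: abs_le_iff)
    ultimately show "F y i = F x i" unfolding C_def by blast
  qed
  then show ?thesis by blast
qed

definition occ :: "(int \<Rightarrow> 'a) \<Rightarrow> (int \<Rightarrow> 'a) \<Rightarrow> int \<Rightarrow> int \<Rightarrow> bool" where
  "occ u x L t \<longleftrightarrow> (\<forall>i. \<bar>i\<bar> \<le> L \<longrightarrow> u (t+i) = x i)"

definition ph :: "(int \<Rightarrow> 'a) \<Rightarrow> (nat \<Rightarrow> nat) \<Rightarrow> nat \<Rightarrow> (int \<Rightarrow> 'a) \<Rightarrow> int \<Rightarrow> bool" where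
  "ph u p n x r \<longleftrightarrow> (\<forall>L. \<exists>t. t mod int (p n) = r mod int (p n) \<and> occ u x L t)"

lemma occ_mono: "occ u x L t \<Longrightarrow> L' \<le> L \<Longrightarrow> occ u x L' t"
  unfolding occ_def by auto

lemma per_cong:
  assumes "j \<in> per q u" "j' mod int q = j mod int q"
  shows "u j' = u j" "j' \<in> per q u"
proof -
  have e: "j' = j + int q * ((j' - j) div int q)"
    using assms(2) by (metis add.commute diff_add_cancel mod_eq_dvd_iff dvd_div_mult_self mult.commute)
  have A: "\<forall>m. u j = u (j + int q * m)" using assms(1) by (simp add: per_def)
  show "u j' = u j" by (subst e) (metis A)
  show "j' \<in> per q u" unfolding per_def
  proof (safe)
    fix m :: int
    have "j' + int q * m = j + int q * ((j' - j) div int q + m)" by (subst e) (simp add: algebra_simps)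
    then show "u j' = u (j' + int q * m)" using A \<open>u j' = u j\<close> by metis
  qed
qed

locale tz =
  fixes u :: "int \<Rightarrow> 'a" and p :: "nat \<Rightarrow> nat"
  assumes ps: "period_structure p u"
begin

lemma p_pos: "p n \<ge> 1"
  using ps by (simp add: period_structure_def essential_period_def)

lemma p_dvd: "n \<le> m \<Longrightarrow> p n dvd p m"
proof (induction m rule: dec_induct)
  case (step m)
  then show ?case using ps dvd_trans unfolding period_structure_def by blast
qed simp

lemma p_dvd_int: "n \<le> m \<Longrightarrow> int (p n) dvd int (p m)"
  using p_dvd by simp

lemma per_mono: "n \<le> m \<Longrightarrow> per (p n) u \<subseteq> per (p m) u"
proof
  fix j assume nm: "n \<le> m" and j: "j \<in> per (p n) u"
  obtain c where c: "int (p m) = int (p n) * c" using p_dvd_int[OF nm] by (elim dvdE)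
  show "j \<in> per (p m) u" unfolding per_def
  proof (safe)
    fix m' :: int
    have "u j = u (j + int (p n) * (c * m'))" using j by (simp add: per_def)
    then show "u j = u (j + int (p m) * m')" by (simp add: c mult.assoc)
  qed
qed

lemma cover_one: "\<exists>N. \<forall>n\<ge>N. a \<in> per (p n) u"
proof -
  have "a \<in> (\<Union>n. per (p n) u)" using ps by (simp add: period_structure_def)
  then obtain N where "a \<in> per (p N) u" by blast
  then show ?thesis using per_mono by blast
qed

lemma cover_finite: "finite A \<Longrightarrow> \<exists>N. \<forall>n\<ge>N. A \<subseteq> per (p n) u"
proof (induction A rule: finite_induct)
  case (insert a A)
  then obtain N1 where N1: "\<forall>n\<ge>N1. A \<subseteq> per (p n) u" by blast
  obtain N2 where N2: "\<forall>n\<ge>N2. a \<in> per (p n) u" using cover_one by blast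
  show ?case by (rule exI[of _ "max N1 N2"]) (use N1 N2 in auto)
qed simp

lemma cover_window: "\<exists>N. \<forall>n\<ge>N. \<forall>i. a \<le> i \<and> i \<le> b \<longrightarrow> i \<in> per (p n) u"
proof -
  obtain N where N: "\<forall>n\<ge>N. {a..b} \<subseteq> per (p n) u" using cover_finite[of "{a..b}"] by blast
  show ?thesis
  proof (intro exI[of _ N] allI impI)
    fix n i assume "N \<le> n" "a \<le> i \<and> i \<le> b"
    then have "i \<in> {a..b}" "{a..b} \<subseteq> per (p n) u" using N by auto
    then show "i \<in> per (p n) u" by blast
  qed
qed

end

context tz begin

abbreviation "X \<equiv> orbit_closure u"
abbreviation "phz \<equiv> ph u p"

lemma ph_exists:
  assumes x: "x \<in> X"
  shows "\<exists>r. phz n x r"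
proof (rule ccontr)
  assume "\<not> (\<exists>r. phz n x r)"
  then have "\<forall>r. \<exists>L. \<forall>t. t mod int (p n) = r mod int (p n) \<longrightarrow> \<not> occ u x L t"
    unfolding ph_def by blast
  then obtain Lf where Lf: "\<And>r t. t mod int (p n) = r mod int (p n) \<Longrightarrow> \<not> occ u x (Lf r) t"
    by metis
  define L where "L = (\<Sum>r\<in>{0..<int (p n)}. \<bar>Lf r\<bar>)"
  obtain t where t: "occ u x L t" using x unfolding mem_X_iff occ_def by blast
  define r where "r = t mod int (p n)"
  have r: "r \<in> {0..<int (p n)}" using p_pos[of n] unfolding r_def by simp
  have "Lf r \<le> L" unfolding L_def
    by (rule order.trans[OF abs_ge_self]) (rule member_le_sum[OF _ _ finite_atLeastLessThan_int], use r in auto)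
  then have "occ u x (Lf r) t" using t occ_mono by blast
  moreover have "t mod int (p n) = r mod int (p n)" unfolding r_def by simp
  ultimately show False using Lf by blast
qed

lemma ph_cong: "phz n x r \<Longrightarrow> r mod int (p n) = r' mod int (p n) \<Longrightarrow> phz n x r'"
  unfolding ph_def by metis

lemma ph_lower: 
  assumes "phz m x r" "n \<le> m" shows "phz n x r"
  unfolding ph_def
proof
  fix L
  obtain t where t: "t mod int (p m) = r mod int (p m)" "occ u x L t" using assms(1) unfolding ph_def by blast
  have "t mod int (p n) = r mod int (p n)" using t(1) p_dvd_int[OF assms(2)] by (metis mod_mod_cancel)
  then show "\<exists>t. t mod int (p n) = r mod int (p n) \<and> occ u x L t" using t(2) by blast
qed

lemma ph_sh: 
  assumes "phz n x r" shows "phz n (sh s x) (r + s)"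
  unfolding ph_def
proof
  fix L
  obtain t where t: "t mod int (p n) = r mod int (p n)" "occ u x (L + \<bar>s\<bar>) t" using assms(1) unfolding ph_def by blast
  have "occ u (sh s x) L (t + s)" unfolding occ_def
  proof (intro allI impI)
    fix i :: int assume "\<bar>i\<bar> \<le> L"
    then have "\<bar>i + s\<bar> \<le> L + \<bar>s\<bar>" by arith
    then have "u (t + (i + s)) = x (i + s)" using t(2) unfolding occ_def by blast
    then show "u (t + s + i) = sh s x i" by (simp add: algebra_simps)
  qed
  moreover have "(t + s) mod int (p n) = (r + s) mod int (p n)" using t(1) by (metis mod_add_left_eq)
  ultimately show "\<exists>t. t mod int (p n) = (r + s) mod int (p n) \<and> occ u (sh s x) L t" by blast
qed

lemma ph_orbit: "phz n (sh b u) b"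
  unfolding ph_def occ_def by (auto simp: add.commute)

lemma ph_agree:
  assumes "phz n y r" "\<forall>i. \<bar>i\<bar> \<le> L \<longrightarrow> y' i = y i"
  shows "\<exists>t. t mod int (p n) = r mod int (p n) \<and> occ u y' L t"
proof -
  obtain t where t: "t mod int (p n) = r mod int (p n)" "occ u y L t" using assms(1) unfolding ph_def by blast
  have "occ u y' L t" using t(2) assms(2) unfolding occ_def by auto
  then show ?thesis using t(1) by blast
qed

end

context tz begin

lemma skel_per:
  "skeleton (p n) u (j + int (p n) * c) = skeleton (p n) u j"
proof (cases "j \<in> per (p n) u")
  case True
  have "(j + int (p n) * c) mod int (p n) = j mod int (p n)" by simp
  then have "u (j + int (p n) * c) = u j" "j + int (p n) * c \<in> per (p n) u" using per_cong[OF True] by blast+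
  then show ?thesis by (simp add: skeleton_def True)
next
  case False
  have "j mod int (p n) = (j + int (p n) * c) mod int (p n)" by simp
  then have "j + int (p n) * c \<notin> per (p n) u" using per_cong(2)[of "j + int (p n) * c" "p n" u j] False by blast
  then show ?thesis by (simp add: skeleton_def False)
qed

lemma ph_unique:
  assumes "phz n x r" "phz n x r'"
  shows "r mod int (p n) = r' mod int (p n)"
proof (rule ccontr)
  assume ne: "r mod int (p n) \<noteq> r' mod int (p n)"
  define P where "P = int (p n)"
  define s where "s = r' - r"
  have Ppos: "P \<ge> 1" using p_pos[of n] by (simp add: P_def)
  have star: "u i = u (i + s)" if hs: "i + s \<in> per (p n) u" for i
  proof -
    define L where "L = \<bar>i\<bar>"
    obtain N0 where N0: "\<forall>m\<ge>N0. \<forall>j. -L \<le> j \<and> j \<le> L \<longrightarrow> j \<in> per (p m) u"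
      using cover_window by blast
    define N where "N = max n N0"
    define Q where "Q = int (p N)"
    have Qpos: "Q \<ge> 1" using p_pos[of N] by (simp add: Q_def)
    have PQ: "P dvd Q" unfolding P_def Q_def N_def by (rule p_dvd_int) simp
    have NN: "N0 \<le> N" unfolding N_def by simp
    have "- L \<le> i \<and> i \<le> L" unfolding L_def by arith
    then have iN: "i \<in> per (p N) u" using N0 NN by blast
    define M where "M = Q + L"
    obtain t where t: "t mod int (p n) = r mod int (p n)" "occ u x M t" using assms(1) unfolding ph_def by blast
    obtain t' where t': "t' mod int (p n) = r' mod int (p n)" "occ u x M t'" using assms(2) unfolding ph_def by blast
    define e where "e = (-t) mod Q"
    have e0: "0 \<le> e" "e < Q" using Qpos unfolding e_def by auto
    have "(t + (-t) mod Q) mod Q = (t + -t) mod Q" by (rule mod_add_right_eq)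
    then have "(t + e) mod Q = 0" unfolding e_def by simp
    then have Qe: "Q dvd (t + e)" by (simp add: dvd_eq_mod_eq_0)
    obtain c where c: "t + e = Q * c" using Qe by (elim dvdE)
    have "t + e + i = i + Q * c" using c by simp
    then have "(t + e + i) mod Q = i mod Q" by simp
    then have "u (t + e + i) = u i" unfolding Q_def by (rule per_cong(1)[OF iN])
    moreover have "\<bar>e + i\<bar> \<le> M" using e0 unfolding M_def L_def by arith
    then have "u (t + (e + i)) = x (e + i)" "u (t' + (e + i)) = x (e + i)"
      using t(2) t'(2) unfolding occ_def by blast+
    ultimately have A: "u (t' + e + i) = u i" by (simp add: add.assoc)
    have d1: "P dvd (t' - r')" using t'(1) unfolding P_def by (simp add: mod_eq_dvd_iff)
    have d2: "P dvd (t - r)" using t(1) unfolding P_def by (simp add: mod_eq_dvd_iff)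
    have d3: "P dvd (t + e)" using PQ Qe by (rule dvd_trans)
    have eq: "(t' + e + i) - (i + s) = (t' - r') + (t + e) - (t - r)" unfolding s_def by simp
    have "P dvd ((t' + e + i) - (i + s))" unfolding eq by (rule dvd_diff[OF dvd_add[OF d1 d3] d2])
    then have "(t' + e + i) mod P = (i + s) mod P" by (simp add: mod_eq_dvd_iff)
    then have "u (t' + e + i) = u (i + s)" unfolding P_def by (rule per_cong(1)[OF hs])
    then show ?thesis using A by simp
  qed
  have down: "j - s \<in> per (p n) u" if j: "j \<in> per (p n) u" for j
    unfolding per_def
  proof (safe)
    fix m :: int
    have jm: "j + int (p n) * m \<in> per (p n) u" using per_cong(2)[OF j, of "j + int (p n) * m"] by simp
    have "u (j - s + int (p n) * m) = u (j + int (p n) * m)" using star[of "j - s + int (p n) * m"] jm by (simp add: algebra_simps)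
    also have "\<dots> = u j" using j by (simp add: per_def)
    also have "\<dots> = u (j - s)" using star[of "j - s"] j by simp
    finally show "u (j - s) = u (j - s + int (p n) * m)" by simp
  qed
  have downm: "j - s * int m \<in> per (p n) u" if j: "j \<in> per (p n) u" for j m
  proof (induction m)
    case 0 then show ?case using j by simp
  next
    case (Suc m)
    then have "j - s * int m - s \<in> per (p n) u" by (rule down)
    then show ?case by (simp add: algebra_simps)
  qed
  have up: "j \<in> per (p n) u" if j: "j - s \<in> per (p n) u" for j
  proof -
    have "j - s - s * int (p n - 1) \<in> per (p n) u" using downm[OF j] by blast
    moreover have "j - s - s * int (p n - 1) = j - s * P" using Ppos unfolding P_def by (simp add: algebra_simps of_nat_diff)
    ultimately have "j - s * P \<in> per (p n) u" by metis
    moreover have "j mod int (p n) = (j - s * P) mod int (p n)" unfolding P_def by (simp add: mod_eq_dvd_iff)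
    ultimately show ?thesis using per_cong(2) by blast
  qed
  have skel: "skeleton (p n) u (j + s) = skeleton (p n) u j" for j
  proof (cases "j + s \<in> per (p n) u")
    case True
    then have "j \<in> per (p n) u" using down[OF True] by simp
    then show ?thesis using True star[OF True] by (simp add: skeleton_def)
  next
    case False
    then have "j \<notin> per (p n) u" using up[of "j + s"] by auto
    then show ?thesis using False by (simp add: skeleton_def)
  qed
  define q where "q = s mod P"
  have q1: "q \<noteq> 0"
  proof
    assume "q = 0"
    then have "P dvd r' - r" unfolding q_def s_def by (simp add: dvd_eq_mod_eq_0)
    then have "r' mod P = r mod P" by (simp add: mod_eq_dvd_iff)
    then show False using ne unfolding P_def by simp
  qed
  have q2: "0 \<le> q" "q < P" using Ppos unfolding q_def by auto
  have "skeleton (p n) u (k + q) = skeleton (p n) u k" for k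
  proof -
    have "q = s - P * (s div P)" unfolding q_def by (simp add: minus_mult_div_eq_mod)
    then have e: "k + q = (k + s) + int (p n) * (- (s div P))" unfolding P_def by (simp add: algebra_simps)
    have "skeleton (p n) u (k + q) = skeleton (p n) u (k + s)" unfolding e by (rule skel_per)
    also have "\<dots> = skeleton (p n) u k" by (rule skel)
    finally show ?thesis .
  qed
  moreover have "essential_period (p n) u" using ps by (simp add: period_structure_def)
  then have ess: "\<forall>q. 1 \<le> q \<and> q < p n \<longrightarrow> (\<exists>k. skeleton (p n) u (k + int q) \<noteq> skeleton (p n) u k)"
    by (simp add: essential_period_def)
  have hq: "1 \<le> nat q \<and> nat q < p n" using q1 q2 unfolding P_def by auto
  obtain k where "skeleton (p n) u (k + int (nat q)) \<noteq> skeleton (p n) u k"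
    using mp[OF spec[OF ess, of "nat q"] hq] by (elim exE)
  ultimately show False using q2 by simp
qed

lemma ph_determ:
  assumes "\<forall>n. \<exists>r. phz n x r \<and> phz n (sh b u) r"
  shows "x = sh b u"
proof
  fix j
  obtain n where n: "j + b \<in> per (p n) u" using cover_one[of "j + b"] by blast
  obtain r where r: "phz n x r" "phz n (sh b u) r" using assms by blast
  have rb: "r mod int (p n) = b mod int (p n)" using ph_unique[OF r(2) ph_orbit] .
  obtain t where t: "t mod int (p n) = r mod int (p n)" "occ u x \<bar>j\<bar> t" using r(1) unfolding ph_def by blast
  have ux: "u (t + j) = x j" using t(2) unfolding occ_def by simp
  have d1: "int (p n) dvd (t - r)" using t(1) by (simp add: mod_eq_dvd_iff)
  have d2: "int (p n) dvd (r - b)" using rb by (simp add: mod_eq_dvd_iff)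
  have eq: "(t + j) - (j + b) = (t - r) + (r - b)" by simp
  have "int (p n) dvd ((t + j) - (j + b))" unfolding eq by (rule dvd_add[OF d1 d2])
  then have "(t + j) mod int (p n) = (j + b) mod int (p n)" by (simp add: mod_eq_dvd_iff)
  then have "u (t + j) = u (j + b)" by (rule per_cong(1)[OF n])
  then show "x j = sh b u j" using ux by simp
qed

end

definition contw :: "(int \<Rightarrow> 'a) set \<Rightarrow> ((int \<Rightarrow> 'a) \<Rightarrow> (int \<Rightarrow> 'a)) \<Rightarrow> bool" where
  "contw X F \<longleftrightarrow> (\<forall>x\<in>X. \<forall>L. \<exists>R. \<forall>y\<in>X. (\<forall>i. \<bar>i\<bar> \<le> R \<longrightarrow> y i = x i) \<longrightarrow> (\<forall>i. \<bar>i\<bar> \<le> L \<longrightarrow> F y i = F x i))"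

lemma contw_of_cont:
  assumes "continuous_map (subtopology fullshift_top X) (subtopology fullshift_top X) F"
  shows "contw X F"
  unfolding contw_def using cont_window[OF assms] by blast

context tz begin

definition Cond :: "int \<Rightarrow> nat \<Rightarrow> int \<Rightarrow> bool" where
  "Cond k n0 P' \<longleftrightarrow> (\<forall>N\<ge>n0. \<exists>z::int. int (p N) dvd (P' - k * z))"

lemma F_pow:
  assumes FX: "\<forall>x\<in>X. F x \<in> X" and Fc: "\<forall>x\<in>X. F (sh k x) = sh k (F x)" and x: "x \<in> X"
  shows "F (sh (k * int m) x) = sh (k * int m) (F x)"
proof (induction m)
  case 0 then show ?case by simp
next
  case (Suc m)
  have y: "sh (k * int m) x \<in> X" using x by (rule sh_in_X)
  have e: "k * int (Suc m) = k + k * int m" by (simp add: algebra_simps)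
  have "F (sh (k * int (Suc m)) x) = F (sh k (sh (k * int m) x))" unfolding e by simp
  also have "\<dots> = sh k (F (sh (k * int m) x))" using Fc y by blast
  also have "\<dots> = sh k (sh (k * int m) (F x))" by (simp only: Suc.IH)
  also have "\<dots> = sh (k * int (Suc m)) (F x)" unfolding e by (rule sh_sh)
  finally show ?case .
qed

lemma lemA:
  assumes cw: "contw X F" and FX: "\<forall>x\<in>X. F x \<in> X" and Fc: "\<forall>x\<in>X. F (sh k x) = sh k (F x)"
    and cond: "Cond k n0 P'" and ph0: "phz n (F (sh a u)) r"
  shows "phz n (F (sh (a + P') u)) (r + P')"
  unfolding ph_def
proof
  fix L
  define y0 where "y0 = sh (a + P') u"
  have y0X: "y0 \<in> X" unfolding y0_def by (rule orbit_in_X)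
  obtain R where R: "\<forall>y\<in>X. (\<forall>i. \<bar>i\<bar> \<le> R \<longrightarrow> y i = y0 i) \<longrightarrow> (\<forall>i. \<bar>i\<bar> \<le> L \<longrightarrow> F y i = F y0 i)"
    using cw y0X unfolding contw_def by blast
  obtain N1 where N1: "\<forall>m\<ge>N1. \<forall>j. a + P' - R \<le> j \<and> j \<le> a + P' + R \<longrightarrow> j \<in> per (p m) u"
    using cover_window by blast
  define N where "N = max n (max n0 N1)"
  have NN: "n0 \<le> N" "N1 \<le> N" "n \<le> N" unfolding N_def by auto
  obtain z where z: "int (p N) dvd (P' - k * z)" using cond NN(1) unfolding Cond_def by blast
  define z' where "z' = z + int (p N) * \<bar>z\<bar>"
  have pN: "int (p N) \<ge> 1" using p_pos[of N] by simp
  have "\<bar>z\<bar> \<le> int (p N) * \<bar>z\<bar>" using pN by (simp add: mult_le_cancel_right1)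
  then have z'0: "z' \<ge> 0" unfolding z'_def by arith
  have eqz: "P' - k * z' = (P' - k * z) - int (p N) * (k * \<bar>z\<bar>)" unfolding z'_def by (simp add: algebra_simps)
  have dz': "int (p N) dvd (P' - k * z')" unfolding eqz by (rule dvd_diff[OF z]) simp
  define m where "m = nat z'"
  have mz: "int m = z'" unfolding m_def using z'0 by simp
  define y1 where "y1 = sh (k * int m) (sh a u)"
  have y1X: "y1 \<in> X" unfolding y1_def by (rule sh_in_X[OF orbit_in_X])
  have agree: "\<forall>i. \<bar>i\<bar> \<le> R \<longrightarrow> y1 i = y0 i"
  proof (intro allI impI)
    fix i :: int assume iR: "\<bar>i\<bar> \<le> R"
    have "a + P' - R \<le> i + (a + P') \<and> i + (a + P') \<le> a + P' + R" using iR by arith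
    then have per: "i + (a + P') \<in> per (p N) u" using N1 NN(2) by blast
    have eq: "(i + (k * z' + a)) - (i + (a + P')) = - (P' - k * z')" by simp
    have "int (p N) dvd ((i + (k * z' + a)) - (i + (a + P')))" unfolding eq using dz' by (simp only: dvd_minus_iff)
    then have "(i + (k * z' + a)) mod int (p N) = (i + (a + P')) mod int (p N)" by (simp add: mod_eq_dvd_iff)
    then have "u (i + (k * z' + a)) = u (i + (a + P'))" by (rule per_cong(1)[OF per])
    then show "y1 i = y0 i" unfolding y1_def y0_def using mz by simp
  qed
  have FA: "\<forall>i. \<bar>i\<bar> \<le> L \<longrightarrow> F y1 i = F y0 i" using R y1X agree by blast
  have "F y1 = sh (k * int m) (F (sh a u))" unfolding y1_def by (rule F_pow[OF FX Fc orbit_in_X])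
  then have ph1: "phz n (F y1) (r + k * int m)" using ph_sh[OF ph0] by simp
  obtain t where t: "t mod int (p n) = (r + k * int m) mod int (p n)" "occ u (F y0) L t"
    using ph_agree[OF ph1, of L "F y0"] FA by auto
  have "int (p n) dvd int (p N)" using NN(3) by (rule p_dvd_int)
  then have d: "int (p n) dvd (P' - k * z')" using dz' by (rule dvd_trans)
  have eq2: "(r + P') - (r + k * int m) = P' - k * z'" using mz by simp
  have "int (p n) dvd ((r + P') - (r + k * int m))" unfolding eq2 by (rule d)
  then have "(r + P') mod int (p n) = (r + k * int m) mod int (p n)" by (simp add: mod_eq_dvd_iff)
  then have "t mod int (p n) = (r + P') mod int (p n)" using t(1) by simp
  then show "\<exists>t. t mod int (p n) = (r + P') mod int (p n) \<and> occ u (F (sh (a + P') u)) L t"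
    using t(2) unfolding y0_def by blast
qed

lemma lemB:
  assumes cw: "contw X F" and FX: "\<forall>x\<in>X. F x \<in> X" and Fc: "\<forall>x\<in>X. F (sh k x) = sh k (F x)"
    and cond: "\<forall>c. Cond k n0 (int (p n) * c)" and x: "x \<in> X" and phx: "phz n x r"
    and phr: "phz n (F (sh r u)) \<rho>"
  shows "phz n (F x) \<rho>"
  unfolding ph_def
proof
  fix L
  obtain R where R: "\<forall>y\<in>X. (\<forall>i. \<bar>i\<bar> \<le> R \<longrightarrow> y i = x i) \<longrightarrow> (\<forall>i. \<bar>i\<bar> \<le> L \<longrightarrow> F y i = F x i)"
    using cw x unfolding contw_def by blast
  obtain t where t: "t mod int (p n) = r mod int (p n)" "occ u x R t" using phx unfolding ph_def by blast
  have ag: "\<forall>i. \<bar>i\<bar> \<le> R \<longrightarrow> sh t u i = x i" using t(2) unfolding occ_def by (simp add: add.commute)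
  have FA: "\<forall>i. \<bar>i\<bar> \<le> L \<longrightarrow> F x i = F (sh t u) i" using R orbit_in_X ag by metis
  have "int (p n) dvd (t - r)" using t(1) by (simp add: mod_eq_dvd_iff)
  then obtain c where c: "t - r = int (p n) * c" by (elim dvdE)
  have tt: "r + int (p n) * c = t" using c by simp
  have "phz n (F (sh (r + int (p n) * c) u)) (\<rho> + int (p n) * c)"
    by (rule lemA[OF cw FX Fc spec[OF cond] phr])
  then have ph1: "phz n (F (sh t u)) \<rho>" unfolding tt by (rule ph_cong) simp
  show "\<exists>t. t mod int (p n) = \<rho> mod int (p n) \<and> occ u (F x) L t"
    by (rule ph_agree[OF ph1 FA])
qed

lemma cond_exists:
  assumes k: "k > 0"
  shows "\<exists>n0. \<forall>n\<ge>n0. \<forall>c. Cond k n0 (int (p n) * c)"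
proof -
  define g where "g N = gcd k (int (p N))" for N
  have gpos: "g N > 0" for N using k unfolding g_def by simp
  have gle: "g N \<le> k" for N using k unfolding g_def by simp
  have bnd: "\<forall>y. True \<longrightarrow> nat (g y) < nat k + 1"
  proof (intro allI impI)
    fix y
    have "nat (g y) \<le> nat k" using gle[of y] by (rule nat_mono)
    then show "nat (g y) < nat k + 1" by simp
  qed
  have "\<exists>x. True \<and> (\<forall>y. True \<longrightarrow> nat (g y) \<le> nat (g x))"
    by (rule Lattices_Big.ex_has_greatest_nat[of "\<lambda>_. True" 0 "\<lambda>N. nat (g N)" "nat k + 1", OF TrueI bnd])
  then obtain n0 where n0: "\<forall>N. nat (g N) \<le> nat (g n0)" by blast
  have geq: "g N = g n0" if "N \<ge> n0" for N
  proof -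
    have "g n0 dvd g N" unfolding g_def
      by (rule gcd_greatest[OF gcd_dvd1 dvd_trans[OF gcd_dvd2 p_dvd_int[OF that]]])
    then have "g n0 \<le> g N" using gpos by (rule zdvd_imp_le)
    moreover have "g N \<le> g n0" using n0[rule_format, of N] gpos[of N] gpos[of n0] by simp
    ultimately show ?thesis by simp
  qed
  show ?thesis
  proof (intro exI[of _ n0] allI impI)
    fix n c assume nn: "n0 \<le> n"
    show "Cond k n0 (int (p n) * c)" unfolding Cond_def
    proof (intro allI impI)
      fix N assume NN: "n0 \<le> N"
      obtain a b where ab: "a * k + b * int (p N) = gcd k (int (p N))" using bezout_int by blast
      have h1: "g n0 dvd int (p n0)" unfolding g_def by simp
      have h2: "int (p n0) dvd int (p n)" by (rule p_dvd_int[OF nn])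
      have "g N dvd int (p n) * c" unfolding geq[OF NN] by (rule dvd_trans[OF dvd_trans[OF h1 h2] dvd_triv_left])
      then obtain e where e: "int (p n) * c = g N * e" by (elim dvdE)
      have h0: "int (p n) * c = (a * k + b * int (p N)) * e" using e ab unfolding g_def by simp
      have h: "int (p n) * c - k * (a * e) = int (p N) * (b * e)" by (subst h0) (simp add: algebra_simps)
      show "\<exists>z. int (p N) dvd (int (p n) * c - k * z)"
      proof (rule exI[of _ "a * e"])
        show "int (p N) dvd (int (p n) * c - k * (a * e))" unfolding h by (rule dvd_triv_left)
      qed
    qed
  qed
qed

end

theorem theorem4p3:
  fixes u :: "int \<Rightarrow> 'a::finite" and p :: "nat \<Rightarrow> nat"
  assumes "toeplitz u" and "\<not> periodic_seq u"
    and "period_structure p u"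
  shows "Aut_infty (orbit_closure u) shift
           = Aut (orbit_closure u) shift \<union> (\<Union>n. Aut (orbit_closure u) (shift ^^ p n))"
proof -
  interpret tz u p by (rule tz.intro) (rule assms(3))
  have top: "topspace (subtopology fullshift_top X) = X" by simp
  show ?thesis
  proof (rule equalityI)
    show "Aut X shift \<union> (\<Union>n. Aut X (shift ^^ p n)) \<subseteq> Aut_infty X shift"
    proof
      fix f assume "f \<in> Aut X shift \<union> (\<Union>n. Aut X (shift ^^ p n))"
      then consider "f \<in> Aut X shift" | n where "f \<in> Aut X (shift ^^ p n)" by blast
      then show "f \<in> Aut_infty X shift"
      proof cases
        case 1
        have "shift ^^ 1 = shift" by simp
        then have "f \<in> Aut X (shift ^^ 1)" using 1 by simp
        then show ?thesis unfolding Aut_infty_def by blast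
      next
        case 2
        have "p n \<in> {1..}" using p_pos[of n] by simp
        then show ?thesis using 2 unfolding Aut_infty_def by blast
      qed
    qed
  next
    show "Aut_infty X shift \<subseteq> Aut X shift \<union> (\<Union>n. Aut X (shift ^^ p n))"
    proof
      fix f assume "f \<in> Aut_infty X shift"
      then obtain kk where kk: "kk \<ge> 1" "f \<in> Aut X (shift ^^ kk)" unfolding Aut_infty_def by auto
      have hm: "homeomorphic_map (subtopology fullshift_top X) (subtopology fullshift_top X) f"
        and comm: "\<forall>x\<in>X. f ((shift ^^ kk) x) = (shift ^^ kk) (f x)"
        using kk(2) unfolding Aut_def by auto
      obtain g where g: "homeomorphic_maps (subtopology fullshift_top X) (subtopology fullshift_top X) f g"
        using hm homeomorphic_map_maps by blast
      have cf: "continuous_map (subtopology fullshift_top X) (subtopology fullshift_top X) f"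
        and cg: "continuous_map (subtopology fullshift_top X) (subtopology fullshift_top X) g"
        and gf: "\<forall>x\<in>X. g (f x) = x" and fg: "\<forall>y\<in>X. f (g y) = y"
        using g unfolding homeomorphic_maps_def top by auto
      have fX: "\<forall>x\<in>X. f x \<in> X" using continuous_map_image_subset_topspace[OF cf] unfolding top by blast
      have gX: "\<forall>x\<in>X. g x \<in> X" using continuous_map_image_subset_topspace[OF cg] unfolding top by blast
      define k where "k = int kk"
      have k0: "k > 0" using kk(1) unfolding k_def by simp
      have fc: "\<forall>x\<in>X. f (sh k x) = sh k (f x)" using comm unfolding shift_pow k_def by blast
      have gc: "\<forall>x\<in>X. g (sh k x) = sh k (g x)"
      proof
        fix x assume x: "x \<in> X"
        have gx: "g x \<in> X" using gX x by blast
        have sx: "sh k (g x) \<in> X" using gx by (rule sh_in_X)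
        have "f (sh k (g x)) = sh k (f (g x))" using fc gx by blast
        also have "\<dots> = sh k x" using fg x by simp
        finally have "g (f (sh k (g x))) = g (sh k x)" by simp
        then show "g (sh k x) = sh k (g x)" using gf sx by simp
      qed
      have cwf: "contw X f" by (rule contw_of_cont[OF cf])
      have cwg: "contw X g" by (rule contw_of_cont[OF cg])
      obtain n0 where n0: "\<forall>n\<ge>n0. \<forall>c. Cond k n0 (int (p n) * c)" using cond_exists[OF k0] by blast
      define P where "P = int (p n0)"
      have condP: "Cond k n0 P" using n0 unfolding P_def by (metis order_refl mult_1_right)
      have step1: "f (sh (b + P) u) = sh P (f (sh b u))" for b
      proof -
        define w where "w = sh P (f (sh b u))"
        have wX: "w \<in> X" unfolding w_def using fX orbit_in_X sh_in_X by blast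
        have fbX: "f (sh (b + P) u) \<in> X" using fX orbit_in_X by blast
        have "g w = sh (b + P) u"
        proof (rule ph_determ, intro allI)
          fix n
          define m where "m = max n n0"
          have mn: "n \<le> m" "n0 \<le> m" unfolding m_def by auto
          obtain \<rho> where rho: "phz m (f (sh b u)) \<rho>" using ph_exists fX orbit_in_X by blast
          have A: "phz m (f (sh (b + P) u)) (\<rho> + P)" by (rule lemA[OF cwf fX fc condP rho])
          have W: "phz m w (\<rho> + P)" unfolding w_def by (rule ph_sh[OF rho])
          obtain \<sigma> where S: "phz m (g (sh (\<rho> + P) u)) \<sigma>" using ph_exists gX orbit_in_X by blast
          have condm: "\<forall>c. Cond k n0 (int (p m) * c)" using n0 mn(2) by blast
          have B1: "phz m (g w) \<sigma>" by (rule lemB[OF cwg gX gc condm wX W S])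
          have B2: "phz m (g (f (sh (b + P) u))) \<sigma>" by (rule lemB[OF cwg gX gc condm fbX A S])
          have "g (f (sh (b + P) u)) = sh (b + P) u" using gf orbit_in_X by blast
          then have B2': "phz m (sh (b + P) u) \<sigma>" using B2 by simp
          show "\<exists>r. phz n (g w) r \<and> phz n (sh (b + P) u) r"
            using ph_lower[OF B1 mn(1)] ph_lower[OF B2' mn(1)] by blast
        qed
        then have "f (g w) = f (sh (b + P) u)" by simp
        then show ?thesis using fg wX unfolding w_def by simp
      qed
      have step2: "f (sh P x) = sh P (f x)" if x: "x \<in> X" for x
      proof
        fix j
        have sPx: "sh P x \<in> X" using x by (rule sh_in_X)
        obtain R1 where R1: "\<forall>y\<in>X. (\<forall>i. \<bar>i\<bar> \<le> R1 \<longrightarrow> y i = sh P x i) \<longrightarrow> (\<forall>i. \<bar>i\<bar> \<le> \<bar>j\<bar> \<longrightarrow> f y i = f (sh P x) i)"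
          using cwf sPx unfolding contw_def by blast
        obtain R2 where R2: "\<forall>y\<in>X. (\<forall>i. \<bar>i\<bar> \<le> R2 \<longrightarrow> y i = x i) \<longrightarrow> (\<forall>i. \<bar>i\<bar> \<le> \<bar>j + P\<bar> \<longrightarrow> f y i = f x i)"
          using cwf x unfolding contw_def by blast
        define R where "R = \<bar>R1\<bar> + \<bar>R2\<bar> + \<bar>P\<bar>"
        obtain t where t: "\<forall>i. \<bar>i\<bar> \<le> R \<longrightarrow> u (t + i) = x i" using x unfolding mem_X_iff by blast
        define y where "y = sh t u"
        have yX: "y \<in> X" unfolding y_def by (rule orbit_in_X)
        have ag2: "\<forall>i. \<bar>i\<bar> \<le> R2 \<longrightarrow> y i = x i"
        proof (intro allI impI)
          fix i :: int assume "\<bar>i\<bar> \<le> R2"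
          then have "\<bar>i\<bar> \<le> R" unfolding R_def by arith
          then show "y i = x i" using t unfolding y_def by (simp add: add.commute)
        qed
        have ag1: "\<forall>i. \<bar>i\<bar> \<le> R1 \<longrightarrow> sh P y i = sh P x i"
        proof (intro allI impI)
          fix i :: int assume "\<bar>i\<bar> \<le> R1"
          then have "\<bar>i + P\<bar> \<le> R" unfolding R_def by arith
          then have "u (t + (i + P)) = x (i + P)" using t by blast
          then show "sh P y i = sh P x i" unfolding y_def by (simp add: ac_simps)
        qed
        have e1: "f (sh P y) j = f (sh P x) j" using R1 sh_in_X[OF yX] ag1 by simp
        have e2: "f y (j + P) = f x (j + P)" using R2 yX ag2 by simp
        have "f (sh P y) = sh P (f y)" unfolding y_def using step1[of t] by (simp add: add.commute)
        then have "f (sh P y) j = f y (j + P)" by simp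
        then show "f (sh P x) j = sh P (f x) j" using e1 e2 by simp
      qed
      have "f \<in> Aut X (shift ^^ p n0)"
        unfolding Aut_def shift_pow using hm step2 unfolding P_def by blast
      then show "f \<in> Aut X shift \<union> (\<Union>n. Aut X (shift ^^ p n))" by blast
    qed
  qed
qed

end
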